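(* Let $\Omega\subset\mathbb{R}^d$ be nonempty, convex and compact with diameter $D$, and let $F(x)=\frac1n\sum_{i=1}^n f_i(x)$ where each $f_i$ is differentiable and $L$-smooth. Let $x^*\in\arg\min_{x\in\Omega}F(x)$, $x_0\in\Omega$, $\beta>0$ with $\beta\ge\frac{2(F(x_0)-F(x^* ))}{LD^2}$, let $m\ge1$ be an integer and $T$ a positive multiple of $m$. Run SVFW (defined in the context) with epoch size $m$, $S=T/m$ epochs, constant step size $\gamma_t=\gamma=\sqrt{\frac{F(x_0)-F(x^* )}{TLD^2\beta}}$ and minibatch size $b_t=b=m^2$ for all $t\in\{0,\dots,m-1\}$. Then the output $x_a$ satisfies $$\mathbb{E}[\mathcal{G}(x_a)]\le\frac{2D}{\sqrt{T\beta}}\sqrt{L(F(x_0)-F(x^* ))}\,(1+\beta).$$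
   Context: $f_i$ is $L$-smooth means $\|\nabla f_i(x)-\nabla f_i(y)\|\le L\|x-y\|$ for all $x,y\in\Omega$; diameter $D$ means $\|x-y\|\le D$ for all $x,y\in\Omega$. Frank–Wolfe gap: $\mathcal{G}(x)=\max_{v\in\Omega}\langle v-x,-\nabla F(x)\rangle$. Algorithm SVFW (input $x_0$, epoch size $m$, number of epochs $S$, step sizes $\gamma_t\in[0,1]$, minibatch sizes $b_t$, $t=0,\dots,m-1$): set $x^0_m=x_0$. For $s=0,\dots,S-1$: let $\tilde x^s=x^s_m$, compute $\tilde g^s=\nabla F(\tilde x^s)$, set $x^{s+1}_0=\tilde x^s$; for $t=0,\dots,m-1$: draw a multiset $I_t$ of $b_t$ indices uniformly at random with replacement from $\{1,\dots,n\}$ (independently of the past), set $\tilde\nabla_t=\frac{1}{b_t}\sum_{i\in I_t}\big(\nabla f_i(x^{s+1}_t)-\nabla f_i(\tilde x^s)\big)+\tilde g^s$, compute $v^{s+1}_t\in\arg\max_{v\in\Omega}\langle v,-\tilde\nabla_t\rangle$ and set $x^{s+1}_{t+1}=x^{s+1}_t+\gamma_t(v^{s+1}_t-x^{s+1}_t)$. The output $x_a$ is chosen uniformly at random from $\{x^{s+1}_t: 0\le t\le m-1,\ 0\le s\le S-1\}$. *)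

theory Defs
  imports "HOL-Analysis.Analysis" "HOL-Probability.Probability"
begin

text \<open>Finite-sum objective F = (1/n) sum_{i<n} f_i (indices 0..n-1 stand for 1..n).\<close>
definition avgF :: "nat \<Rightarrow> (nat \<Rightarrow> 'a \<Rightarrow> real) \<Rightarrow> 'a \<Rightarrow> real" where
  "avgF n f x = (1 / real n) * (\<Sum>i<n. f i x)"

definition avgGrad :: "nat \<Rightarrow> (nat \<Rightarrow> 'a \<Rightarrow> 'a::real_normed_vector) \<Rightarrow> 'a \<Rightarrow> 'a" where
  "avgGrad n gf x = (1 / real n) *\<^sub>R (\<Sum>i<n. gf i x)"

definition fw_gap :: "'a::real_inner set \<Rightarrow> ('a \<Rightarrow> 'a) \<Rightarrow> 'a \<Rightarrow> real" where
  "fw_gap \<Omega> gradF x = Sup ((\<lambda>v. (v - x) \<bullet> (- gradF x)) ` \<Omega>)"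

definition is_lmo :: "'a::real_inner set \<Rightarrow> ('a \<Rightarrow> 'a) \<Rightarrow> bool" where
  "is_lmo \<Omega> lmo \<longleftrightarrow> (\<forall>g. lmo g \<in> \<Omega> \<and> (\<forall>v\<in>\<Omega>. v \<bullet> (- g) \<le> lmo g \<bullet> (- g)))"

text \<open>SVFW trajectory, indexed by the global step k = s*m + t.  The state is
  (current iterate x_k, snapshot of the current epoch).  The randomness is
  w :: nat => nat => nat, where w k j is the j-th sampled index at global step k.
  At the start of each epoch (k mod m = 0) the snapshot is set to the current iterate.
  traj ... k = (x^{s+1}_t, \<dots>) for k = s*m + t; in particular fst (traj ... (s*m+m))
  = x^{s+1}_m = x^{s+2}_0.\<close>
primrec svfw_traj ::
  "nat \<Rightarrow> (nat \<Rightarrow> 'a \<Rightarrow> 'a::real_inner) \<Rightarrow> ('a \<Rightarrow> 'a) \<Rightarrow> nat \<Rightarrow> real \<Rightarrow> nat \<Rightarrow> 'a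
     \<Rightarrow> (nat \<Rightarrow> nat \<Rightarrow> nat) \<Rightarrow> nat \<Rightarrow> 'a \<times> 'a" where
  "svfw_traj n gf lmo m \<gamma> b x0 w 0 = (x0, x0)"
| "svfw_traj n gf lmo m \<gamma> b x0 w (Suc k) =
     (let (x, xs) = svfw_traj n gf lmo m \<gamma> b x0 w k;
          xt = (if k mod m = 0 then x else xs);
          est = (1 / real b) *\<^sub>R (\<Sum>j<b. gf (w k j) x - gf (w k j) xt) + avgGrad n gf xt;
          v = lmo est
      in (x + \<gamma> *\<^sub>R (v - x), xt))"

definition sample_pmf :: "nat \<Rightarrow> nat \<Rightarrow> nat \<Rightarrow> (nat \<Rightarrow> nat \<Rightarrow> nat) pmf" where
  "sample_pmf T b n =
     Pi_pmf {..<T} (\<lambda>_. 0) (\<lambda>_. Pi_pmf {..<b} 0 (\<lambda>_. pmf_of_set {..<n}))"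

text \<open>Distribution of the output x_a of SVFW with T = S*m total inner steps:
  uniform over the iterates x_k, k < T (i.e. x^{s+1}_t, 0<=t<m, 0<=s<S).\<close>
definition svfw_output ::
  "nat \<Rightarrow> (nat \<Rightarrow> 'a \<Rightarrow> 'a::real_inner) \<Rightarrow> ('a \<Rightarrow> 'a) \<Rightarrow> nat \<Rightarrow> nat \<Rightarrow> real \<Rightarrow> nat \<Rightarrow> 'a \<Rightarrow> 'a pmf" where
  "svfw_output n gf lmo m S \<gamma> b x0 =
     do { w \<leftarrow> sample_pmf (S * m) b n;
          k \<leftarrow> pmf_of_set {..<S * m};
          return_pmf (fst (svfw_traj n gf lmo m \<gamma> b x0 w k)) }"

end

theory Submission
  imports Defs
begin


lemma avgF_deriv:
  assumes "\<And>i. i < n \<Longrightarrow> (f i has_derivative (\<lambda>h. gf i x \<bullet> h)) (at x)"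
  shows "(avgF n f has_derivative (\<lambda>h. avgGrad n gf x \<bullet> h)) (at x)"
proof -
  have "((\<lambda>x. \<Sum>i<n. f i x) has_derivative (\<lambda>h. \<Sum>i<n. gf i x \<bullet> h)) (at x)"
    by (rule has_derivative_sum) (use assms in auto)
  then have "((\<lambda>x. (1 / real n) * (\<Sum>i<n. f i x)) has_derivative (\<lambda>h. (1 / real n) * (\<Sum>i<n. gf i x \<bullet> h))) (at x)"
    by (rule has_derivative_mult_right)
  moreover have "(\<lambda>h. (1 / real n) * (\<Sum>i<n. gf i x \<bullet> h)) = (\<lambda>h. avgGrad n gf x \<bullet> h)"
    by (auto simp: avgGrad_def inner_sum_left)
  ultimately show ?thesis by (simp add: avgF_def[abs_def])
qed

lemma avgGrad_lip:
  fixes gf :: "nat \<Rightarrow> 'a \<Rightarrow> 'a::real_normed_vector"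
  assumes "n \<ge> 1" "\<And>i. i < n \<Longrightarrow> norm (gf i x - gf i y) \<le> L * norm (x - y)"
  shows "norm (avgGrad n gf x - avgGrad n gf y) \<le> L * norm (x - y)"
proof -
  have "avgGrad n gf x - avgGrad n gf y = (1 / real n) *\<^sub>R (\<Sum>i<n. gf i x - gf i y)"
    by (simp add: avgGrad_def sum_subtractf scaleR_diff_right)
  also have "norm \<dots> = (1 / real n) * norm (\<Sum>i<n. gf i x - gf i y)" by simp
  also have "\<dots> \<le> (1 / real n) * (\<Sum>i<n. L * norm (x - y))"
    by (intro mult_left_mono order_trans[OF norm_sum] sum_mono assms) auto
  also have "\<dots> = L * norm (x - y)" using assms(1) by simp
  finally show ?thesis .
qed

lemma descent:
  fixes F :: "'a::real_inner \<Rightarrow> real"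
  assumes cvx: "convex \<Omega>" and x: "x \<in> \<Omega>" and y: "y \<in> \<Omega>"
    and der: "\<And>z. z \<in> \<Omega> \<Longrightarrow> (F has_derivative (\<lambda>h. g z \<bullet> h)) (at z)"
    and lip: "\<And>z w. z \<in> \<Omega> \<Longrightarrow> w \<in> \<Omega> \<Longrightarrow> norm (g z - g w) \<le> L * norm (z - w)"
  shows "F y \<le> F x + g x \<bullet> (y - x) + L / 2 * norm (y - x)^2"
proof -
  define \<phi> where "\<phi> t = F (x + t *\<^sub>R (y - x)) - t * (g x \<bullet> (y - x)) - L / 2 * t^2 * norm (y - x)^2" for t
  have "\<phi> 1 \<le> \<phi> 0"
  proof (rule DERIV_nonpos_imp_nonincreasing[of 0 1 \<phi>])
    fix t :: real assume t0: "0 \<le> t" and t1: "t \<le> 1"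
    have t: "0 \<le> t \<and> t \<le> 1" using t0 t1 by simp
    define z where "z = x + t *\<^sub>R (y - x)"
    have zO: "z \<in> \<Omega>" unfolding z_def
      using convexD_alt[OF cvx x y, of t] t by (simp add: algebra_simps)
    have d1: "((\<lambda>t. x + t *\<^sub>R (y - x)) has_derivative (\<lambda>h. h *\<^sub>R (y - x))) (at t)"
      by (auto intro!: derivative_eq_intros)
    have d2: "((\<lambda>t. F (x + t *\<^sub>R (y - x))) has_derivative (\<lambda>h. g z \<bullet> (h *\<^sub>R (y - x)))) (at t)"
    proof -
      have "(F has_derivative (\<lambda>h. g z \<bullet> h)) (at (x + t *\<^sub>R (y - x)))"
        using der[OF zO] by (simp add: z_def)
      from has_derivative_compose[OF d1 this] show ?thesis by simp
    qed
    have d3: "((\<lambda>t. F (x + t *\<^sub>R (y - x))) has_real_derivative (g z \<bullet> (y - x))) (at t)"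
      using d2 unfolding has_field_derivative_def by (simp add: mult.commute[of _ "g z \<bullet> (y - x)"])
    have "(\<phi> has_real_derivative (g z \<bullet> (y - x) - g x \<bullet> (y - x) - L / 2 * (2 * t) * norm (y - x)^2)) (at t)"
      unfolding \<phi>_def[abs_def]
      by (rule derivative_eq_intros d3 refl | simp)+
    moreover have "g z \<bullet> (y - x) - g x \<bullet> (y - x) - L / 2 * (2 * t) * norm (y - x)^2 \<le> 0"
    proof -
      have "g z \<bullet> (y - x) - g x \<bullet> (y - x) = (g z - g x) \<bullet> (y - x)" by (simp add: inner_diff_left)
      also have "\<dots> \<le> norm (g z - g x) * norm (y - x)" by (rule norm_cauchy_schwarz)
      also have "\<dots> \<le> L * norm (z - x) * norm (y - x)" by (intro mult_right_mono lip zO x) auto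
      also have "norm (z - x) = t * norm (y - x)" using t by (simp add: z_def)
      finally show ?thesis by (simp add: power2_eq_square algebra_simps)
    qed
    ultimately show "\<exists>y. (\<phi> has_real_derivative y) (at t) \<and> y \<le> 0" by blast
  qed simp
  then show ?thesis by (simp add: \<phi>_def)
qed




context
  fixes n :: nat and gf :: "nat \<Rightarrow> 'a \<Rightarrow> 'a::real_inner" and lmo :: "'a \<Rightarrow> 'a"
    and m :: nat and \<gamma> :: real and b :: nat and x0 :: 'a
begin

definition "xk w k = fst (svfw_traj n gf lmo m \<gamma> b x0 w k)"
definition "snap w k = (if k mod m = 0 then xk w k else snd (svfw_traj n gf lmo m \<gamma> b x0 w k))"
definition "estim w k = (1 / real b) *\<^sub>R (\<Sum>j<b. gf (w k j) (xk w k) - gf (w k j) (snap w k)) + avgGrad n gf (snap w k)"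

lemma traj_Suc: "svfw_traj n gf lmo m \<gamma> b x0 w (Suc k) =
   (xk w k + \<gamma> *\<^sub>R (lmo (estim w k) - xk w k), snap w k)"
  by (simp add: xk_def snap_def estim_def case_prod_unfold Let_def)

lemma xk_Suc: "xk w (Suc k) = xk w k + \<gamma> *\<^sub>R (lmo (estim w k) - xk w k)"
  by (simp only: xk_def[of w "Suc k"] traj_Suc fst_conv)

lemma xk_0: "xk w 0 = x0" by (simp add: xk_def)

lemma traj_local: "(\<And>j. j < k \<Longrightarrow> w j = w' j) \<Longrightarrow> svfw_traj n gf lmo m \<gamma> b x0 w k = svfw_traj n gf lmo m \<gamma> b x0 w' k"
  by (induction k) (auto simp: Let_def case_prod_unfold)

lemma xk_local: "(\<And>j. j < k \<Longrightarrow> w j = w' j) \<Longrightarrow> xk w k = xk w' k"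
  unfolding xk_def by (subst traj_local[of k w w']) auto

lemma snap_local: "(\<And>j. j < k \<Longrightarrow> w j = w' j) \<Longrightarrow> snap w k = snap w' k"
proof -
  assume a: "\<And>j. j < k \<Longrightarrow> w j = w' j"
  have eq: "svfw_traj n gf lmo m \<gamma> b x0 w k = svfw_traj n gf lmo m \<gamma> b x0 w' k"
    by (rule traj_local) (rule a)
  show ?thesis unfolding snap_def xk_def eq ..
qed

lemma snap_eq: "m \<ge> 1 \<Longrightarrow> snap w k = xk w (k - k mod m)"
proof (induction k)
  case 0 then show ?case by (simp add: snap_def)
next
  case (Suc k)
  show ?case
  proof (cases "Suc k mod m = 0")
    case True then show ?thesis unfolding snap_def by simp
  next
    case False
    then have sm: "Suc k mod m = Suc (k mod m)" by (metis mod_Suc)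
    have "snap w (Suc k) = snd (svfw_traj n gf lmo m \<gamma> b x0 w (Suc k))" using False
      unfolding snap_def by (simp only: if_False)
    also have "\<dots> = snap w k" by (simp only: traj_Suc snd_conv)
    also have "\<dots> = xk w (k - k mod m)" using Suc.IH Suc.prems by blast
    also have "k - k mod m = Suc k - Suc k mod m" using sm by simp
    finally show ?thesis .
  qed
qed

lemma xk_in:
  assumes "is_lmo \<Omega> lmo" "convex \<Omega>" "x0 \<in> \<Omega>" "0 \<le> \<gamma>" "\<gamma> \<le> 1"
  shows "xk w k \<in> \<Omega>"
proof (induction k)
  case 0 then show ?case using assms by (simp add: xk_0)
next
  case (Suc k)
  have v: "lmo (estim w k) \<in> \<Omega>" using assms(1) by (simp add: is_lmo_def)
  have "xk w k + \<gamma> *\<^sub>R (lmo (estim w k) - xk w k) = (1 - \<gamma>) *\<^sub>R xk w k + \<gamma> *\<^sub>R lmo (estim w k)"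
    by (simp add: algebra_simps)
  also have "\<dots> \<in> \<Omega>" using convexD_alt[OF assms(2) Suc v, of \<gamma>] assms by (simp add: algebra_simps)
  finally show ?case by (simp add: xk_Suc)
qed

lemma xk_dist:
  assumes "is_lmo \<Omega> lmo" "convex \<Omega>" "x0 \<in> \<Omega>" "0 \<le> \<gamma>" "\<gamma> \<le> 1"
    and diam: "\<And>x y. x \<in> \<Omega> \<Longrightarrow> y \<in> \<Omega> \<Longrightarrow> norm (x - y) \<le> D"
  shows "norm (xk w (k + r) - xk w k) \<le> real r * \<gamma> * D"
proof (induction r)
  case 0 then show ?case by simp
next
  case (Suc r)
  have v: "lmo (estim w (k + r)) \<in> \<Omega>" using assms(1) by (simp add: is_lmo_def)
  have st: "norm (xk w (k + Suc r) - xk w (k + r)) \<le> \<gamma> * D"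
    using mult_left_mono[OF diam[OF v xk_in[OF assms(1-5), of w "k+r"]] assms(4)] assms(4)
    by (simp add: xk_Suc)
  have "norm (xk w (k + Suc r) - xk w k) \<le> norm (xk w (k + Suc r) - xk w (k + r)) + norm (xk w (k + r) - xk w k)"
    by (rule norm_diff_triangle_le) (rule order_refl)+
  also have "\<dots> \<le> \<gamma> * D + real r * \<gamma> * D" using st Suc by simp
  finally show ?case by (simp add: algebra_simps)
qed

end




lemma exp_bind:
  fixes h :: "'b \<Rightarrow> real"
  assumes "finite (set_pmf p)" "\<And>a. a \<in> set_pmf p \<Longrightarrow> finite (set_pmf (f a))"
  shows "measure_pmf.expectation (bind_pmf p f) h = measure_pmf.expectation p (\<lambda>a. measure_pmf.expectation (f a) h)"
  by (subst pmf_expectation_bind[of "set_pmf p"]) (use assms in \<open>auto simp: integral_measure_pmf[of "set_pmf p"]\<close>)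

lemma exp_pair:
  fixes g :: "'a \<times> 'b \<Rightarrow> real"
  assumes "finite (set_pmf A)" "finite (set_pmf B)"
  shows "measure_pmf.expectation (pair_pmf A B) g = measure_pmf.expectation A (\<lambda>a. measure_pmf.expectation B (\<lambda>b. g (a, b)))"
  unfolding pair_pmf_def using assms
  by (simp add: exp_bind)

lemma exp_mono:
  fixes f g :: "'a \<Rightarrow> real"
  assumes "finite (set_pmf p)" "\<And>x. x \<in> set_pmf p \<Longrightarrow> f x \<le> g x"
  shows "measure_pmf.expectation p f \<le> measure_pmf.expectation p g"
  by (rule integral_mono_AE) (use assms in \<open>auto simp: AE_measure_pmf_iff intro: integrable_measure_pmf_finite\<close>)

lemma exp_const: "measure_pmf.expectation p (\<lambda>x. c::real) = c"
  by simp

lemma exp_add: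
  fixes f g :: "'a \<Rightarrow> real"
  assumes "finite (set_pmf p)"
  shows "measure_pmf.expectation p (\<lambda>x. f x + g x) = measure_pmf.expectation p f + measure_pmf.expectation p g"
  by (rule Bochner_Integration.integral_add) (use assms in \<open>auto intro: integrable_measure_pmf_finite\<close>)

lemma exp_diff:
  fixes f g :: "'a \<Rightarrow> real"
  assumes "finite (set_pmf p)"
  shows "measure_pmf.expectation p (\<lambda>x. f x - g x) = measure_pmf.expectation p f - measure_pmf.expectation p g"
  by (rule Bochner_Integration.integral_diff) (use assms in \<open>auto intro: integrable_measure_pmf_finite\<close>)

lemma exp_cmult:
  fixes f :: "'a \<Rightarrow> real"
  shows "measure_pmf.expectation p (\<lambda>x. c * f x) = c * measure_pmf.expectation p f"
  by simp

lemma exp_sum: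
  fixes f :: "nat \<Rightarrow> 'a \<Rightarrow> real"
  assumes "finite (set_pmf p)"
  shows "measure_pmf.expectation p (\<lambda>x. \<Sum>i\<in>I. f i x) = (\<Sum>i\<in>I. measure_pmf.expectation p (f i))"
  by (rule Bochner_Integration.integral_sum) (use assms in \<open>auto intro: integrable_measure_pmf_finite\<close>)

lemma exp_jensen:
  fixes g :: "'a \<Rightarrow> real"
  assumes "finite (set_pmf p)"
  shows "measure_pmf.expectation p g \<le> sqrt (measure_pmf.expectation p (\<lambda>x. (g x)^2))"
proof -
  define c where "c = measure_pmf.expectation p g"
  have "0 \<le> measure_pmf.expectation p (\<lambda>x. (g x - c)^2)"
    by (rule integral_nonneg_AE) auto
  also have "(\<lambda>x. (g x - c)^2) = (\<lambda>x. ((g x)^2 - 2 * c * g x) + c^2)"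
    by (auto simp: power2_eq_square algebra_simps)
  also have "measure_pmf.expectation p \<dots> = measure_pmf.expectation p (\<lambda>x. (g x)^2) - 2 * c * c + c^2"
    using assms by (simp add: exp_add exp_diff c_def)
  finally have "c^2 \<le> measure_pmf.expectation p (\<lambda>x. (g x)^2)" by (simp add: power2_eq_square)
  then have "sqrt (c^2) \<le> sqrt (measure_pmf.expectation p (\<lambda>x. (g x)^2))" by (rule real_sqrt_le_mono)
  then show ?thesis by (simp add: c_def)
qed




lemma Y_set: "n \<ge> 1 \<Longrightarrow> set_pmf (Pi_pmf {..<b::nat} (0::nat) (\<lambda>_. pmf_of_set {..<n})) = PiE_dflt {..<b} 0 (\<lambda>_. {..<n})"
  by (subst set_Pi_pmf) (auto simp: o_def lessThan_empty_iff)

lemma Y_finite: "n \<ge> 1 \<Longrightarrow> finite (set_pmf (Pi_pmf {..<b::nat} (0::nat) (\<lambda>_. pmf_of_set {..<n})))"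
  by (subst Y_set) (auto intro!: finite_PiE_dflt)

lemma U_finite: "n \<ge> 1 \<Longrightarrow> finite (set_pmf (pmf_of_set {..<(n::nat)}))"
  by (simp add: lessThan_empty_iff)

lemma sum_dev_zero:
  fixes a :: "nat \<Rightarrow> 'a::real_vector"
  assumes "n \<ge> 1"
  shows "(\<Sum>i<n. a i - (1 / real n) *\<^sub>R (\<Sum>i<n. a i)) = 0"
  using assms by (simp add: sum_subtractf sum_constant_scaleR)

lemma var_sum:
  fixes a :: "nat \<Rightarrow> 'a::real_inner"
  assumes n: "n \<ge> 1"
  defines "\<mu> \<equiv> (1 / real n) *\<^sub>R (\<Sum>i<n. a i)"
  shows "measure_pmf.expectation (Pi_pmf {..<b::nat} (0::nat) (\<lambda>_. pmf_of_set {..<n}))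
           (\<lambda>y. norm (\<Sum>j<b. a (y j) - \<mu>)^2) = real b * ((\<Sum>i<n. norm (a i - \<mu>)^2) / real n)"
proof (induction b)
  case 0 then show ?case by simp
next
  case (Suc b)
  define V where "V = (\<Sum>i<n. norm (a i - \<mu>)^2) / real n"
  define U where "U = pmf_of_set {..<n}"
  define Y where "Y = Pi_pmf {..<b} (0::nat) (\<lambda>_. U)"
  have fU: "finite (set_pmf U)" using U_finite[OF n] by (simp add: U_def)
  have fY: "finite (set_pmf Y)" using Y_finite[OF n] by (simp add: Y_def U_def)
  have "Pi_pmf {..<Suc b} (0::nat) (\<lambda>_. U) = Pi_pmf (insert b {..<b}) 0 (\<lambda>_. U)"
    by (simp add: lessThan_Suc)
  also have "\<dots> = map_pmf (\<lambda>(y, f). f(b := y)) (pair_pmf U Y)"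
    unfolding Y_def by (rule Pi_pmf_insert) auto
  also have "pair_pmf U Y = map_pmf (\<lambda>(x, y). (y, x)) (pair_pmf Y U)"
    by (rule pair_commute_pmf)
  also have "map_pmf (\<lambda>(y, f). f(b := y)) (map_pmf (\<lambda>(x, y). (y, x)) (pair_pmf Y U)) = map_pmf (\<lambda>(f, y). f(b := y)) (pair_pmf Y U)"
    unfolding map_pmf_comp by (intro map_pmf_cong refl) auto
  finally have eq: "Pi_pmf {..<Suc b} (0::nat) (\<lambda>_. U) = map_pmf (\<lambda>(f, y). f(b := y)) (pair_pmf Y U)" .
  define S where "S f = (\<Sum>j<b. a (f j) - \<mu>)" for f :: "nat \<Rightarrow> nat"
  have inner: "measure_pmf.expectation U (\<lambda>z. norm (S f + (a z - \<mu>))^2) = norm (S f)^2 + V" for f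
  proof -
    have "measure_pmf.expectation U (\<lambda>z. norm (S f + (a z - \<mu>))^2)
        = (\<Sum>z<n. norm (S f + (a z - \<mu>))^2) / real n"
      unfolding U_def using n by (subst integral_pmf_of_set) (auto simp: lessThan_empty_iff)
    also have "(\<Sum>z<n. norm (S f + (a z - \<mu>))^2) = (\<Sum>z<n. norm (S f)^2 + 2 * (S f \<bullet> (a z - \<mu>)) + norm (a z - \<mu>)^2)"
      by (intro sum.cong refl) (simp add: power2_norm_eq_inner algebra_simps inner_commute)
    also have "\<dots> = real n * norm (S f)^2 + 2 * (S f \<bullet> (\<Sum>z<n. a z - \<mu>)) + (\<Sum>z<n. norm (a z - \<mu>)^2)"
      by (simp add: sum.distrib inner_sum_right sum_distrib_left)
    also have "(\<Sum>z<n. a z - \<mu>) = 0" unfolding \<mu>_def by (rule sum_dev_zero[OF n])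
    finally show ?thesis using n by (simp add: V_def field_simps)
  qed
  have "measure_pmf.expectation (Pi_pmf {..<Suc b} (0::nat) (\<lambda>_. U)) (\<lambda>y. norm (\<Sum>j<Suc b. a (y j) - \<mu>)^2)
      = measure_pmf.expectation (pair_pmf Y U) (\<lambda>(f, y). norm (\<Sum>j<Suc b. a ((f(b := y)) j) - \<mu>)^2)"
    unfolding eq by (simp add: case_prod_unfold)
  also have "\<dots> = measure_pmf.expectation Y (\<lambda>f. measure_pmf.expectation U (\<lambda>z. norm (\<Sum>j<Suc b. a ((f(b := z)) j) - \<mu>)^2))"
    by (subst exp_pair[OF fY fU]) simp
  also have "\<dots> = measure_pmf.expectation Y (\<lambda>f. measure_pmf.expectation U (\<lambda>z. norm (S f + (a z - \<mu>))^2))"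
    by (intro Bochner_Integration.integral_cong refl) (simp add: S_def)
  also have "\<dots> = measure_pmf.expectation Y (\<lambda>f. norm (S f)^2 + V)"
    by (simp add: inner)
  also have "\<dots> = real b * V + V"
    using Suc.IH fY by (simp add: exp_add S_def Y_def U_def V_def)
  finally show ?case by (simp add: U_def V_def algebra_simps add_divide_distrib)
qed

lemma V_bound:
  fixes a :: "nat \<Rightarrow> 'a::real_inner"
  assumes n: "n \<ge> 1" and M: "\<And>i. i < n \<Longrightarrow> norm (a i) \<le> M"
  defines "\<mu> \<equiv> (1 / real n) *\<^sub>R (\<Sum>i<n. a i)"
  shows "(\<Sum>i<n. norm (a i - \<mu>)^2) / real n \<le> M^2"
proof -
  have "(\<Sum>i<n. norm (a i - \<mu>)^2) = (\<Sum>i<n. norm (a i)^2 - 2 * (a i \<bullet> \<mu>) + norm \<mu>^2)"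
    by (intro sum.cong refl) (simp add: power2_norm_eq_inner algebra_simps inner_commute)
  also have "\<dots> = (\<Sum>i<n. norm (a i)^2) - 2 * ((\<Sum>i<n. a i) \<bullet> \<mu>) + real n * norm \<mu>^2"
    by (simp add: sum.distrib sum_subtractf inner_sum_left sum_distrib_left)
  also have "(\<Sum>i<n. a i) = real n *\<^sub>R \<mu>" using n by (simp add: \<mu>_def)
  also have "(\<Sum>i<n. norm (a i)^2) - 2 * ((real n *\<^sub>R \<mu>) \<bullet> \<mu>) + real n * norm \<mu>^2
      = (\<Sum>i<n. norm (a i)^2) - real n * norm \<mu>^2"
    by (simp add: power2_norm_eq_inner)
  also have "\<dots> \<le> (\<Sum>i<n. norm (a i)^2)" by simp
  also have "\<dots> \<le> (\<Sum>i<n. M^2)"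
    by (intro sum_mono power_mono M) auto
  finally show ?thesis using n by (simp add: field_simps)
qed




lemma err_bound:
  fixes gf :: "nat \<Rightarrow> 'a \<Rightarrow> 'a::real_inner"
  assumes n: "n \<ge> 1" and b: "b \<ge> 1" and M: "\<And>i. i < n \<Longrightarrow> norm (gf i x - gf i xt) \<le> M"
  shows "measure_pmf.expectation (Pi_pmf {..<b::nat} (0::nat) (\<lambda>_. pmf_of_set {..<n}))
     (\<lambda>y. norm ((1 / real b) *\<^sub>R (\<Sum>j<b. gf (y j) x - gf (y j) xt) + avgGrad n gf xt - avgGrad n gf x))
     \<le> M / sqrt (real b)"
proof -
  define a where "a i = gf i x - gf i xt" for i
  define \<mu> where "\<mu> = (1 / real n) *\<^sub>R (\<Sum>i<n. a i)"
  define Y where "Y = Pi_pmf {..<b::nat} (0::nat) (\<lambda>_. pmf_of_set {..<n})"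
  have fY: "finite (set_pmf Y)" unfolding Y_def by (rule Y_finite[OF n])
  have M0: "0 \<le> M" using M[of 0] n by (meson norm_ge_zero order_trans less_le_trans zero_less_one)
  have mu: "avgGrad n gf x - avgGrad n gf xt = \<mu>"
    by (simp add: avgGrad_def \<mu>_def a_def sum_subtractf scaleR_diff_right)
  have vec: "(1 / real b) *\<^sub>R (\<Sum>j<b. gf (y j) x - gf (y j) xt) + avgGrad n gf xt - avgGrad n gf x
      = (1 / real b) *\<^sub>R (\<Sum>j<b. a (y j) - \<mu>)" for y :: "nat \<Rightarrow> nat"
  proof -
    have "(1 / real b) *\<^sub>R (\<Sum>j<b. a (y j) - \<mu>) = (1 / real b) *\<^sub>R (\<Sum>j<b. a (y j)) - \<mu>"
      using b by (simp add: sum_subtractf scaleR_diff_right sum_constant_scaleR)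
    then show ?thesis using mu by (simp add: a_def algebra_simps)
  qed
  have Q: "measure_pmf.expectation Y (\<lambda>y. (norm ((1 / real b) *\<^sub>R (\<Sum>j<b. a (y j) - \<mu>)))^2) \<le> M^2 / real b"
  proof -
    have "measure_pmf.expectation Y (\<lambda>y. (norm ((1 / real b) *\<^sub>R (\<Sum>j<b. a (y j) - \<mu>)))^2)
      = measure_pmf.expectation Y (\<lambda>y. (1 / real b)^2 * (norm (\<Sum>j<b. a (y j) - \<mu>))^2)"
      by (intro Bochner_Integration.integral_cong refl) (simp add: power_divide)
    also have "\<dots> = (1 / real b)^2 * (real b * ((\<Sum>i<n. norm (a i - \<mu>)^2) / real n))"
      unfolding exp_cmult Y_def \<mu>_def by (subst var_sum[OF n]) simp
    also have "\<dots> \<le> (1 / real b)^2 * (real b * M^2)"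
      unfolding \<mu>_def using M by (intro mult_left_mono V_bound[OF n]) (auto simp: a_def)
    also have "\<dots> = M^2 / real b" using b by (simp add: power2_eq_square)
    finally show ?thesis .
  qed
  have "measure_pmf.expectation Y
     (\<lambda>y. norm ((1 / real b) *\<^sub>R (\<Sum>j<b. gf (y j) x - gf (y j) xt) + avgGrad n gf xt - avgGrad n gf x))
     = measure_pmf.expectation Y (\<lambda>y. norm ((1 / real b) *\<^sub>R (\<Sum>j<b. a (y j) - \<mu>)))"
    by (simp only: vec)
  also have "\<dots> \<le> sqrt (measure_pmf.expectation Y (\<lambda>y. (norm ((1 / real b) *\<^sub>R (\<Sum>j<b. a (y j) - \<mu>)))^2))"
    by (rule exp_jensen[OF fY])
  also have "\<dots> \<le> sqrt (M^2 / real b)" using Q by (rule real_sqrt_le_mono)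
  also have "sqrt (M^2 / real b) = M / sqrt (real b)" using M0 by (simp add: real_sqrt_divide)
  finally show ?thesis unfolding Y_def .
qed




lemma gap_le:
  fixes G :: "'a::real_inner \<Rightarrow> 'a"
  assumes "\<Omega> \<noteq> {}" "\<And>u. u \<in> \<Omega> \<Longrightarrow> (u - x) \<bullet> (- G x) \<le> B"
  shows "fw_gap \<Omega> G x \<le> B"
  unfolding fw_gap_def using assms by (intro cSUP_least) auto

lemma step_gap:
  fixes G :: "'a::real_inner \<Rightarrow> 'a" and F :: "'a \<Rightarrow> real"
  assumes ne: "\<Omega> \<noteq> {}" and x: "x \<in> \<Omega>" and v: "v \<in> \<Omega>"
    and lm: "\<And>u. u \<in> \<Omega> \<Longrightarrow> u \<bullet> (- est) \<le> v \<bullet> (- est)"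
    and diam: "\<And>x y. x \<in> \<Omega> \<Longrightarrow> y \<in> \<Omega> \<Longrightarrow> norm (x - y) \<le> D"
    and g0: "0 \<le> \<gamma>" and L0: "0 \<le> L"
    and desc: "F (x + \<gamma> *\<^sub>R (v - x)) \<le> F x + G x \<bullet> (\<gamma> *\<^sub>R (v - x)) + L / 2 * norm (\<gamma> *\<^sub>R (v - x))^2"
  shows "\<gamma> * fw_gap \<Omega> G x \<le> F x - F (x + \<gamma> *\<^sub>R (v - x)) + L / 2 * \<gamma>^2 * D^2 + \<gamma> * D * norm (est - G x)"
proof -
  define e where "e = est - G x"
  have gap: "fw_gap \<Omega> G x \<le> - (G x \<bullet> (v - x)) + D * norm e"
  proof (rule gap_le[OF ne])
    fix u assume u: "u \<in> \<Omega>"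
    have "(u - x) \<bullet> (- G x) = (u - x) \<bullet> (- est) + (u - x) \<bullet> e"
      by (simp add: e_def inner_diff_right)
    also have "(u - x) \<bullet> (- est) \<le> (v - x) \<bullet> (- est)"
      using lm[OF u] by (simp add: inner_diff_left)
    also have "(v - x) \<bullet> (- est) = - (G x \<bullet> (v - x)) - (v - x) \<bullet> e"
      by (simp add: e_def inner_diff_right inner_commute)
    finally have "(u - x) \<bullet> (- G x) \<le> - (G x \<bullet> (v - x)) + (u - v) \<bullet> e"
      by (simp add: inner_diff_left)
    also have "(u - v) \<bullet> e \<le> norm (u - v) * norm e" by (rule norm_cauchy_schwarz)
    also have "\<dots> \<le> D * norm e" by (intro mult_right_mono diam u v) auto
    finally show "(u - x) \<bullet> (- G x) \<le> - (G x \<bullet> (v - x)) + D * norm e" by simp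
  qed
  have nv: "norm (v - x) \<le> D" using diam[OF v x] .
  have "norm (\<gamma> *\<^sub>R (v - x))^2 = \<gamma>^2 * norm (v - x)^2" by (simp add: power_mult_distrib g0)
  also have "\<dots> \<le> \<gamma>^2 * D^2" by (intro mult_left_mono power_mono nv) auto
  finally have sq: "norm (\<gamma> *\<^sub>R (v - x))^2 \<le> \<gamma>^2 * D^2" .
  have "\<gamma> * fw_gap \<Omega> G x \<le> \<gamma> * (- (G x \<bullet> (v - x)) + D * norm e)"
    by (rule mult_left_mono[OF gap g0])
  moreover have "F (x + \<gamma> *\<^sub>R (v - x)) \<le> F x + \<gamma> * (G x \<bullet> (v - x)) + L / 2 * (\<gamma>^2 * D^2)"
    using desc mult_left_mono[OF sq, of "L/2"] L0 by simp
  ultimately show ?thesis by (simp add: e_def algebra_simps)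
qed

lemma gap_min:
  fixes G :: "'a::real_inner \<Rightarrow> 'a" and F :: "'a \<Rightarrow> real"
  assumes ne: "\<Omega> \<noteq> {}" and cvx: "convex \<Omega>" and x: "x \<in> \<Omega>"
    and min: "\<And>y. y \<in> \<Omega> \<Longrightarrow> F x \<le> F y"
    and diam: "\<And>x y. x \<in> \<Omega> \<Longrightarrow> y \<in> \<Omega> \<Longrightarrow> norm (x - y) \<le> D"
    and L0: "0 \<le> L"
    and desc: "\<And>y. y \<in> \<Omega> \<Longrightarrow> F y \<le> F x + G x \<bullet> (y - x) + L / 2 * norm (y - x)^2"
  shows "fw_gap \<Omega> G x \<le> 0"
proof (rule gap_le[OF ne])
  fix u assume u: "u \<in> \<Omega>"
  define c where "c = (u - x) \<bullet> (- G x)"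
  show "(u - x) \<bullet> (- G x) \<le> 0"
  proof (rule ccontr)
    assume "\<not> (u - x) \<bullet> (- G x) \<le> 0"
    then have c0: "c > 0" by (simp add: c_def)
    define s where "s = min 1 (c / (L * D^2 + 1))"
    have LD: "0 \<le> L * D^2" using L0 by simp
    have s0: "0 < s" using c0 LD by (simp add: s_def)
    have s1: "s \<le> 1" by (simp add: s_def)
    have "s \<le> c / (L * D^2 + 1)" by (simp add: s_def)
    then have sc: "s * (L * D^2 + 1) \<le> c" using LD by (simp add: pos_le_divide_eq)
    have y: "x + s *\<^sub>R (u - x) \<in> \<Omega>"
      using convexD_alt[OF cvx x u, of s] s0 s1 by (simp add: algebra_simps)
    have "F x \<le> F (x + s *\<^sub>R (u - x))" by (rule min[OF y])
    also have "\<dots> \<le> F x + G x \<bullet> (s *\<^sub>R (u - x)) + L / 2 * norm (s *\<^sub>R (u - x))^2"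
      using desc[OF y] by simp
    also have "norm (s *\<^sub>R (u - x))^2 = s^2 * norm (u - x)^2"
      using s0 by (simp add: power_mult_distrib)
    finally have "0 \<le> - s * c + L / 2 * (s^2 * norm (u - x)^2)"
      using s0 by (simp add: c_def power_mult_distrib inner_diff_right inner_commute algebra_simps)
    also have "\<dots> \<le> - s * c + L / 2 * (s^2 * D^2)"
      using L0 by (intro add_left_mono mult_left_mono power_mono diam u x) auto
    finally have "s * c \<le> s * (s * (L * D^2 / 2))" by (simp add: power2_eq_square algebra_simps)
    then have "c \<le> s * (L * D^2 / 2)" using s0 by simp
    also have "\<dots> < s * (L * D^2 + 1)" using s0 LD by (intro mult_strict_left_mono) auto
    finally show False using sc by simp
  qed
qed




lemma final_alg:
  fixes \<Delta> D L \<beta> T A :: real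
  assumes "\<Delta> > 0" "D > 0" "L > 0" "\<beta> > 0" "T \<ge> 1"
    and g: "\<gamma> = sqrt (\<Delta> / (T * L * D^2 * \<beta>))"
    and main: "\<gamma> * T * A \<le> \<Delta> + T * (L / 2 * \<gamma>^2 * D^2) + \<gamma> * D * (T * (L * \<gamma> * D))"
  shows "A \<le> 2 * D / sqrt (T * \<beta>) * sqrt (L * \<Delta>) * (1 + \<beta>)"
proof -
  have pos: "\<Delta> / (T * L * D^2 * \<beta>) > 0" using assms by simp
  then have g0: "\<gamma> > 0" using g by simp
  have g2: "\<gamma>^2 = \<Delta> / (T * L * D^2 * \<beta>)" using g pos by simp
  then have De: "\<Delta> = \<gamma>^2 * T * L * D^2 * \<beta>" using assms by (simp add: field_simps)
  have "\<gamma> * T * A \<le> \<gamma> * T * (\<gamma> * L * D^2 * (\<beta> + 3/2))"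
    using main unfolding De by (simp add: power2_eq_square algebra_simps)
  then have A: "A \<le> \<gamma> * L * D^2 * (\<beta> + 3/2)"
    using g0 assms(5) by (simp add: mult_le_cancel_left_pos)
  have "2 * D / sqrt (T * \<beta>) * sqrt (L * \<Delta>) = 2 * D * sqrt (L * \<Delta> / (T * \<beta>))"
    by (simp add: real_sqrt_divide)
  also have "L * \<Delta> / (T * \<beta>) = (\<gamma> * L * D)^2"
    using assms unfolding De by (simp add: power2_eq_square field_simps)
  also have "sqrt ((\<gamma> * L * D)^2) = \<gamma> * L * D" using g0 assms by simp
  finally have R: "2 * D / sqrt (T * \<beta>) * sqrt (L * \<Delta>) = 2 * \<gamma> * L * D^2"
    by (simp add: power2_eq_square)
  have "\<gamma> * L * D^2 * (\<beta> + 3/2) \<le> 2 * \<gamma> * L * D^2 * (1 + \<beta>)"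
  proof -
    have "0 \<le> \<gamma> * L * D^2" using g0 assms by simp
    then have "\<gamma> * L * D^2 * (\<beta> + 3/2) \<le> \<gamma> * L * D^2 * (2 * (1 + \<beta>))"
      using assms by (intro mult_left_mono) auto
    then show ?thesis by (simp add: algebra_simps)
  qed
  then show ?thesis using A R by simp
qed


theorem theorem3:
  fixes \<Omega> :: "'a::euclidean_space set"
    and f :: "nat \<Rightarrow> 'a \<Rightarrow> real" and gf :: "nat \<Rightarrow> 'a \<Rightarrow> 'a"
    and n m S :: nat and L D \<beta> :: real and x0 xstar :: 'a
    and lmo :: "'a \<Rightarrow> 'a"
  assumes "\<Omega> \<noteq> {}" and "convex \<Omega>" and "compact \<Omega>"
    and "n \<ge> 1"
    and "L > 0"
    and diam: "\<And>x y. x \<in> \<Omega> \<Longrightarrow> y \<in> \<Omega> \<Longrightarrow> norm (x - y) \<le> D"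
    and deriv: "\<And>i x. i < n \<Longrightarrow> x \<in> \<Omega> \<Longrightarrow> (f i has_derivative (\<lambda>h. gf i x \<bullet> h)) (at x)"
    and smooth: "\<And>i x y. i < n \<Longrightarrow> x \<in> \<Omega> \<Longrightarrow> y \<in> \<Omega> \<Longrightarrow> norm (gf i x - gf i y) \<le> L * norm (x - y)"
    and "xstar \<in> \<Omega>" and "\<And>x. x \<in> \<Omega> \<Longrightarrow> avgF n f xstar \<le> avgF n f x"
    and "x0 \<in> \<Omega>"
    and "\<beta> > 0"
    and "\<beta> \<ge> 2 * (avgF n f x0 - avgF n f xstar) / (L * D^2)"
    and "m \<ge> 1" and "S \<ge> 1"
    and "is_lmo \<Omega> lmo"
  shows "measure_pmf.expectation
           (svfw_output n gf lmo m S
              (sqrt ((avgF n f x0 - avgF n f xstar) / (real (S * m) * L * D^2 * \<beta>)))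
              (m^2) x0)
           (fw_gap \<Omega> (avgGrad n gf))
         \<le> 2 * D / sqrt (real (S * m) * \<beta>)
             * sqrt (L * (avgF n f x0 - avgF n f xstar)) * (1 + \<beta>)"
proof -
  note ne = assms(1) and cvx = assms(2) and n1 = assms(4) and L0 = assms(5)
    and xs = assms(9) and minF = assms(10) and x0O = assms(11) and b0 = assms(12)
    and bge = assms(13) and m1 = assms(14) and S1 = assms(15) and lmoO = assms(16)
  define \<Delta> where "\<Delta> = avgF n f x0 - avgF n f xstar"
  define T where "T = S * m"
  define b where "b = m^2"
  define \<gamma> where "\<gamma> = sqrt (\<Delta> / (real T * L * D^2 * \<beta>))"
  define X where "X = xk n gf lmo m \<gamma> b x0"
  define SN where "SN = snap n gf lmo m \<gamma> b x0"
  define ES where "ES = estim n gf lmo m \<gamma> b x0"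
  define Fo where "Fo = avgF n f"
  define Gr where "Gr = avgGrad n gf"
  define Y where "Y = Pi_pmf {..<b} (0::nat) (\<lambda>_. pmf_of_set {..<n})"
  define W where "W = sample_pmf T b n"
  define A where "A = measure_pmf.expectation (svfw_output n gf lmo m S \<gamma> b x0) (fw_gap \<Omega> Gr)"
  have T1: "T \<ge> 1" using m1 S1 by (simp add: T_def)
  have b1: "b \<ge> 1" using m1 by (simp add: b_def)
  have D0: "0 \<le> D" using diam[OF x0O x0O] by simp
  have Delta0: "0 \<le> \<Delta>" using minF[OF x0O] by (simp add: \<Delta>_def)
  have g0: "0 \<le> \<gamma>"
  proof -
    have "0 \<le> real T * L * D^2 * \<beta>" using L0 b0 by simp
    then have "0 \<le> \<Delta> / (real T * L * D^2 * \<beta>)" using Delta0 by simp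
    then show ?thesis unfolding \<gamma>_def by simp
  qed
  have g1: "\<gamma> \<le> 1"
  proof (cases "D = 0")
    case True then show ?thesis by (simp add: \<gamma>_def)
  next
    case False
    then have LD: "L * D^2 > 0" using L0 D0 by simp
    have "2 * \<Delta> / (L * D^2) \<le> \<beta>" using bge by (simp add: \<Delta>_def)
    then have h1: "2 * \<Delta> \<le> \<beta> * (L * D^2)" using LD by (simp add: pos_divide_le_eq)
    have h2: "\<beta> * (L * D^2) \<le> real T * L * D^2 * \<beta>"
    proof -
      have "1 * (\<beta> * (L * D^2)) \<le> real T * (\<beta> * (L * D^2))"
        using T1 LD b0 by (intro mult_right_mono) auto
      then show ?thesis by (simp add: algebra_simps)
    qed
    have "0 < real T * (L * D^2) * \<beta>" using T1 LD b0 L0 False by (intro mult_pos_pos) auto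
    then have pos: "0 < real T * L * D^2 * \<beta>" by (simp add: mult.assoc)
    have "\<Delta> \<le> real T * L * D^2 * \<beta>" using h1 h2 Delta0 by linarith
    then have "\<Delta> / (real T * L * D^2 * \<beta>) \<le> 1" using pos by (simp add: divide_le_eq)
    then show ?thesis by (simp add: \<gamma>_def)
  qed
  have der: "\<And>z. z \<in> \<Omega> \<Longrightarrow> (Fo has_derivative (\<lambda>h. Gr z \<bullet> h)) (at z)"
    unfolding Fo_def Gr_def by (rule avgF_deriv) (rule deriv)
  have lip: "\<And>z w. z \<in> \<Omega> \<Longrightarrow> w \<in> \<Omega> \<Longrightarrow> norm (Gr z - Gr w) \<le> L * norm (z - w)"
    unfolding Gr_def by (rule avgGrad_lip[OF n1]) (rule smooth)
  have desc: "\<And>x y. x \<in> \<Omega> \<Longrightarrow> y \<in> \<Omega> \<Longrightarrow> Fo y \<le> Fo x + Gr x \<bullet> (y - x) + L / 2 * norm (y - x)^2"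
    by (rule descent[OF cvx _ _ der lip])
  have Xin: "\<And>w k. X w k \<in> \<Omega>"
    unfolding X_def by (rule xk_in[OF lmoO cvx x0O g0 g1])
  have fY: "finite (set_pmf Y)" unfolding Y_def by (rule Y_finite[OF n1])
  have WPi: "W = Pi_pmf {..<T} (\<lambda>_. 0) (\<lambda>_. Y)"
    by (simp add: W_def Y_def sample_pmf_def)
  have fW: "finite (set_pmf W)" unfolding WPi
    by (subst set_Pi_pmf) (auto intro!: finite_PiE_dflt simp: fY)
  have Tne: "{..<T} \<noteq> {}" using T1 by (simp add: lessThan_empty_iff)
  have rep: "A = measure_pmf.expectation W (\<lambda>w. (\<Sum>k<T. fw_gap \<Omega> Gr (X w k)) / real T)"
  proof -
    have "svfw_output n gf lmo m S \<gamma> b x0 = bind_pmf W (\<lambda>w. bind_pmf (pmf_of_set {..<T}) (\<lambda>k. return_pmf (X w k)))"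
      by (simp add: svfw_output_def W_def T_def X_def xk_def)
    then have "A = measure_pmf.expectation W (\<lambda>w. measure_pmf.expectation (bind_pmf (pmf_of_set {..<T}) (\<lambda>k. return_pmf (X w k))) (fw_gap \<Omega> Gr))"
      unfolding A_def using fW Tne by (simp add: exp_bind)
    also have "\<dots> = measure_pmf.expectation W (\<lambda>w. (\<Sum>k<T. fw_gap \<Omega> Gr (X w k)) / real T)"
      using Tne by (intro Bochner_Integration.integral_cong refl)
        (simp add: pmf_expectation_bind_pmf_of_set sum_divide_distrib divide_inverse mult.commute sum_distrib_left)
    finally show ?thesis .
  qed
  have step: "\<gamma> * fw_gap \<Omega> Gr (X w k) \<le> Fo (X w k) - Fo (X w (Suc k)) + L / 2 * \<gamma>^2 * D^2 + \<gamma> * D * norm (ES w k - Gr (X w k))" for w k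
  proof -
    have v: "lmo (ES w k) \<in> \<Omega>" using lmoO by (simp add: is_lmo_def)
    have lm: "\<And>u. u \<in> \<Omega> \<Longrightarrow> u \<bullet> (- ES w k) \<le> lmo (ES w k) \<bullet> (- ES w k)"
      using lmoO by (simp add: is_lmo_def)
    have XS: "X w (Suc k) = X w k + \<gamma> *\<^sub>R (lmo (ES w k) - X w k)"
      unfolding X_def ES_def by (rule xk_Suc)
    have d: "Fo (X w k + \<gamma> *\<^sub>R (lmo (ES w k) - X w k)) \<le> Fo (X w k) + Gr (X w k) \<bullet> (\<gamma> *\<^sub>R (lmo (ES w k) - X w k)) + L / 2 * norm (\<gamma> *\<^sub>R (lmo (ES w k) - X w k))^2"
      using desc[OF Xin[of w k] Xin[of w "Suc k"]] unfolding XS by simp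
    have "\<gamma> * fw_gap \<Omega> Gr (X w k) \<le> Fo (X w k) - Fo (X w k + \<gamma> *\<^sub>R (lmo (ES w k) - X w k)) + L / 2 * \<gamma>^2 * D^2 + \<gamma> * D * norm (ES w k - Gr (X w k))"
      using step_gap[where \<Omega>=\<Omega> and x="X w k" and v="lmo (ES w k)" and est="ES w k" and D=D and \<gamma>=\<gamma> and L=L and F=Fo and G=Gr,
        OF ne Xin[of w k] v lm diam g0 _ d] L0 by simp
    then show ?thesis unfolding XS .
  qed
  have pw: "\<gamma> * (\<Sum>k<T. fw_gap \<Omega> Gr (X w k)) \<le> \<Delta> + real T * (L / 2 * \<gamma>^2 * D^2) + \<gamma> * D * (\<Sum>k<T. norm (ES w k - Gr (X w k)))" for w
  proof -
    have "\<gamma> * (\<Sum>k<T. fw_gap \<Omega> Gr (X w k)) = (\<Sum>k<T. \<gamma> * fw_gap \<Omega> Gr (X w k))"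
      by (simp add: sum_distrib_left)
    also have "\<dots> \<le> (\<Sum>k<T. (Fo (X w k) - Fo (X w (Suc k))) + (L / 2 * \<gamma>^2 * D^2 + \<gamma> * D * norm (ES w k - Gr (X w k))))"
      by (intro sum_mono) (use step in \<open>simp add: algebra_simps\<close>)
    also have "\<dots> = (Fo (X w 0) - Fo (X w T)) + real T * (L / 2 * \<gamma>^2 * D^2) + \<gamma> * D * (\<Sum>k<T. norm (ES w k - Gr (X w k)))"
      using sum_lessThan_telescope'[of "\<lambda>k. Fo (X w k)" T] by (simp add: sum.distrib sum_distrib_left)
    also have "Fo (X w 0) - Fo (X w T) \<le> \<Delta>"
      using minF[OF Xin[of w T]] by (simp add: X_def xk_0 \<Delta>_def Fo_def)
    finally show ?thesis by simp
  qed
  have err: "measure_pmf.expectation W (\<lambda>w. norm (ES w k - Gr (X w k))) \<le> L * \<gamma> * D" if kT: "k < T" for k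
  proof -
    define P where "P = Pi_pmf ({..<T} - {k}) (\<lambda>_. 0::nat) (\<lambda>_. Y)"
    have fP: "finite (set_pmf P)" unfolding P_def
      by (subst set_Pi_pmf) (auto intro!: finite_PiE_dflt simp: fY)
    have "W = Pi_pmf (insert k ({..<T} - {k})) (\<lambda>_. 0) (\<lambda>_. Y)"
      unfolding WPi using kT by (simp add: insert_absorb)
    also have "\<dots> = map_pmf (\<lambda>(y, f). f(k := y)) (pair_pmf Y P)"
      unfolding P_def by (rule Pi_pmf_insert) auto
    also have "pair_pmf Y P = map_pmf (\<lambda>(x, y). (y, x)) (pair_pmf P Y)"
      by (rule pair_commute_pmf)
    also have "map_pmf (\<lambda>(y, f). f(k := y)) (map_pmf (\<lambda>(x, y). (y, x)) (pair_pmf P Y)) = map_pmf (\<lambda>(f, y). f(k := y)) (pair_pmf P Y)"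
      unfolding map_pmf_comp by (intro map_pmf_cong refl) auto
    finally have Weq: "W = map_pmf (\<lambda>(f, y). f(k := y)) (pair_pmf P Y)" .
    have inner: "measure_pmf.expectation Y (\<lambda>y. norm (ES (f(k := y)) k - Gr (X (f(k := y)) k))) \<le> L * \<gamma> * D" for f
    proof -
      have loc: "\<And>j. j < k \<Longrightarrow> (f(k := y)) j = f j" for y by simp
      have XE: "X (f(k := y)) k = X f k" for y unfolding X_def by (rule xk_local) (simp add: loc)
      have SE: "SN (f(k := y)) k = SN f k" for y unfolding SN_def by (rule snap_local) (simp add: loc)
      have ESE: "ES (f(k := y)) k - Gr (X (f(k := y)) k) =
         (1 / real b) *\<^sub>R (\<Sum>j<b. gf (y j) (X f k) - gf (y j) (SN f k)) + avgGrad n gf (SN f k) - avgGrad n gf (X f k)" for y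
        using XE[of y] SE[of y] by (simp add: ES_def estim_def X_def SN_def Gr_def)
      have nrm: "norm (X f k - SN f k) \<le> real m * \<gamma> * D"
      proof -
        have "SN f k = X f (k - k mod m)" unfolding SN_def X_def by (rule snap_eq[OF m1])
        moreover have "k = (k - k mod m) + k mod m" by simp
        ultimately have "norm (X f k - SN f k) = norm (X f ((k - k mod m) + k mod m) - X f (k - k mod m))" by simp
        also have "\<dots> \<le> real (k mod m) * \<gamma> * D" unfolding X_def
          by (rule xk_dist[OF lmoO cvx x0O g0 g1 diam])
        also have "\<dots> \<le> real m * \<gamma> * D"
          using m1 g0 D0 by (intro mult_right_mono) (auto simp: less_imp_le)
        finally show ?thesis .
      qed
      have Mb: "\<And>i. i < n \<Longrightarrow> norm (gf i (X f k) - gf i (SN f k)) \<le> L * norm (X f k - SN f k)"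
        by (rule smooth) (auto simp: Xin SN_def snap_eq[OF m1] X_def[symmetric])
      have "measure_pmf.expectation Y (\<lambda>y. norm (ES (f(k := y)) k - Gr (X (f(k := y)) k)))
          \<le> L * norm (X f k - SN f k) / sqrt (real b)"
        unfolding ESE Y_def by (rule err_bound[where gf=gf and x="X f k" and xt="SN f k", OF n1 b1 Mb])
      also have "sqrt (real b) = real m" by (simp add: b_def)
      also have "L * norm (X f k - SN f k) / real m \<le> L * (real m * \<gamma> * D) / real m"
        using L0 m1 nrm by (intro divide_right_mono mult_left_mono) auto
      also have "\<dots> = L * \<gamma> * D" using m1 by simp
      finally show ?thesis .
    qed
    have "measure_pmf.expectation W (\<lambda>w. norm (ES w k - Gr (X w k)))
        = measure_pmf.expectation (pair_pmf P Y) (\<lambda>(f, y). norm (ES (f(k := y)) k - Gr (X (f(k := y)) k)))"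
      unfolding Weq by (simp add: case_prod_unfold)
    also have "\<dots> = measure_pmf.expectation P (\<lambda>f. measure_pmf.expectation Y (\<lambda>y. norm (ES (f(k := y)) k - Gr (X (f(k := y)) k))))"
      by (subst exp_pair[OF fP fY]) simp
    also have "\<dots> \<le> measure_pmf.expectation P (\<lambda>f. L * \<gamma> * D)"
      by (rule exp_mono[OF fP inner])
    also have "\<dots> = L * \<gamma> * D" by simp
    finally show ?thesis .
  qed
  have main: "\<gamma> * real T * A \<le> \<Delta> + real T * (L / 2 * \<gamma>^2 * D^2) + \<gamma> * D * (real T * (L * \<gamma> * D))"
  proof -
    have "\<gamma> * real T * A = measure_pmf.expectation W (\<lambda>w. \<gamma> * (\<Sum>k<T. fw_gap \<Omega> Gr (X w k)))"
      unfolding rep using T1 by simp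
    also have "\<dots> \<le> measure_pmf.expectation W (\<lambda>w. \<Delta> + real T * (L / 2 * \<gamma>^2 * D^2) + \<gamma> * D * (\<Sum>k<T. norm (ES w k - Gr (X w k))))"
      by (rule exp_mono[OF fW pw])
    also have "\<dots> = \<Delta> + real T * (L / 2 * \<gamma>^2 * D^2) + \<gamma> * D * (\<Sum>k<T. measure_pmf.expectation W (\<lambda>w. norm (ES w k - Gr (X w k))))"
      using fW by (simp add: exp_add exp_sum)
    also have "(\<Sum>k<T. measure_pmf.expectation W (\<lambda>w. norm (ES w k - Gr (X w k)))) \<le> (\<Sum>k<T. L * \<gamma> * D)"
      by (intro sum_mono err) auto
    finally show ?thesis using g0 D0 by (simp add: mult_left_mono)
  qed
  have goal_eq: "measure_pmf.expectation
           (svfw_output n gf lmo m S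
              (sqrt ((avgF n f x0 - avgF n f xstar) / (real (S * m) * L * D^2 * \<beta>)))
              (m^2) x0)
           (fw_gap \<Omega> (avgGrad n gf)) = A"
    by (simp add: A_def \<gamma>_def \<Delta>_def T_def b_def Gr_def)
  have "A \<le> 2 * D / sqrt (real (S * m) * \<beta>) * sqrt (L * (avgF n f x0 - avgF n f xstar)) * (1 + \<beta>)"
  proof (cases "\<Delta> = 0")
    case True
    then have g00: "\<gamma> = 0" by (simp add: \<gamma>_def)
    have Xc: "X w k = x0" for w k
      by (induction k) (simp_all add: X_def xk_0 xk_Suc g00)
    have minx0: "\<And>y. y \<in> \<Omega> \<Longrightarrow> Fo x0 \<le> Fo y"
      using minF True by (simp add: \<Delta>_def Fo_def)
    have gx0: "fw_gap \<Omega> Gr x0 \<le> 0"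
      by (rule gap_min[where F=Fo and G=Gr and L=L and D=D, OF ne cvx x0O minx0 diam _ desc[OF x0O]]) (use L0 in auto)
    have "A \<le> measure_pmf.expectation W (\<lambda>w. 0)"
      unfolding rep by (rule exp_mono[OF fW]) (use gx0 in \<open>simp add: Xc divide_nonpos_pos\<close>)
    then show ?thesis using True by (simp add: \<Delta>_def)
  next
    case False
    then have Dp: "\<Delta> > 0" using Delta0 by simp
    have Dpos: "D > 0"
    proof (rule ccontr)
      assume "\<not> D > 0"
      then have "D = 0" using D0 by simp
      then have "xstar = x0" using diam[OF xs x0O] by simp
      then show False using Dp by (simp add: \<Delta>_def)
    qed
    have "A \<le> 2 * D / sqrt (real T * \<beta>) * sqrt (L * \<Delta>) * (1 + \<beta>)"
      by (rule final_alg[OF Dp Dpos L0 b0 _ \<gamma>_def main]) (use T1 in simp)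
    then show ?thesis by (simp add: T_def \<Delta>_def)
  qed
  then show ?thesis using goal_eq by linarith
qed

end
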